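(* Let $h:\{x_1,\dots,x_n\}^*\to\{a_1,\dots,a_k\}^*$ be a solution of rank $n-1$ of both equations $E$ and $E'$, and let $\alpha\in\mathbb N^k$. Then $\mathcal S_E(L(\vartheta_\alpha\circ h))$ and $\mathcal S_{E'}(L(\vartheta_\alpha\circ h))$ are linearly dependent over $\mathbb Q(x)$.
   Context: An equation is a pair $(u,v)$ of words over $\{x_1,\dots,x_n\}$; a solution is a morphism $h$ with $h(u)=h(v)$. For $h:\{x_1,\dots,x_n\}^*\to\{a_1,\dots,a_k\}^*$, $\gamma(h)_i=(|h(x_1)|_{a_i},\dots,|h(x_n)|_{a_i})$ and the rank of $h$ is the dimension of the $\mathbb Q$-span of the $\gamma(h)_i$. $L(h)=(|h(x_1)|,\dots,|h(x_n)|)$. $\mathbb N$ is the positive integers; for $\alpha\in\mathbb N^k$, $\vartheta_\alpha$ is the endomorphism of $\{a_1,\dots,a_k\}^*$ given by $a_i\mapsto a_i^{(\alpha)_i}$. For $E=(x_{i_1}\cdots x_{i_r},\,x_{j_1}\cdots x_{j_s})$, $S_{E,x_j}=\sum_{a:\,i_a=j}\prod_{t=1}^{a-1}X_{i_t}-\sum_{a:\,j_a=j}\prod_{t=1}^{a-1}X_{j_t}$ (empty product $=1$); for $\beta\in\mathbb N_0^n$, $\mathcal S_E(\beta)=(S_{E,x_1}(\beta),\dots,S_{E,x_n}(\beta))\in\mathbb Z[x]^n$ where $p(\beta)$ is the image of $p$ under $X_i\mapsto x^{(\beta)_i}$. *)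

theory Defs
  imports Main "HOL-Library.Function_Algebras" "HOL-Computational_Algebra.Polynomial" "HOL-Computational_Algebra.Fraction_Field"
begin

(* Variables x_1..x_n are encoded as naturals 0..n-1, letters a_1..a_k as 0..k-1.
   A word is a nat list; a morphism h is given by the images h i of the variables. *)

definition morph :: "(nat \<Rightarrow> nat list) \<Rightarrow> nat list \<Rightarrow> nat list" where
  "morph h w = concat (map h w)"

definition is_morph :: "nat \<Rightarrow> nat \<Rightarrow> (nat \<Rightarrow> nat list) \<Rightarrow> bool" where
  "is_morph n k h \<longleftrightarrow> (\<forall>i<n. set (h i) \<subseteq> {..<k})"

definition is_equation :: "nat \<Rightarrow> nat list \<times> nat list \<Rightarrow> bool" where
  "is_equation n E \<longleftrightarrow> set (fst E) \<subseteq> {..<n} \<and> set (snd E) \<subseteq> {..<n}"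

definition is_solution :: "(nat \<Rightarrow> nat list) \<Rightarrow> nat list \<times> nat list \<Rightarrow> bool" where
  "is_solution h E \<longleftrightarrow> morph h (fst E) = morph h (snd E)"

(* gamma(h)_i in Q^n, represented as a function nat => rat vanishing outside {..<n} *)
definition gamma :: "nat \<Rightarrow> (nat \<Rightarrow> nat list) \<Rightarrow> nat \<Rightarrow> (nat \<Rightarrow> rat)" where
  "gamma n h i = (\<lambda>j. if j < n then of_nat (count_list (h j) i) else 0)"

definition rank_morph :: "nat \<Rightarrow> nat \<Rightarrow> (nat \<Rightarrow> nat list) \<Rightarrow> nat" where
  "rank_morph n k h = vector_space.dim (\<lambda>(c::rat) (f::nat \<Rightarrow> rat). (\<lambda>j. c * f j)) (gamma n h ` {..<k})"

definition Lvec :: "(nat \<Rightarrow> nat list) \<Rightarrow> nat \<Rightarrow> nat" where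
  "Lvec h i = length (h i)"

definition theta :: "(nat \<Rightarrow> nat) \<Rightarrow> nat list \<Rightarrow> nat list" where
  "theta \<alpha> w = concat (map (\<lambda>c. replicate (\<alpha> c) c) w)"

(* One sum in S_{E,x_j}(beta): sum over positions a with w_a = j of x^(beta_{w_1}+...+beta_{w_{a-1}}),
   since (prod_{t<a} X_{w_t})(beta) = x^(sum_{t<a} beta_{w_t}). *)
definition S_side :: "nat list \<Rightarrow> nat \<Rightarrow> (nat \<Rightarrow> nat) \<Rightarrow> int poly" where
  "S_side w j \<beta> = (\<Sum>a<length w. if w ! a = j then monom 1 (\<Sum>t<a. \<beta> (w ! t)) else 0)"

definition S_poly :: "nat list \<times> nat list \<Rightarrow> nat \<Rightarrow> (nat \<Rightarrow> nat) \<Rightarrow> int poly" where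
  "S_poly E j \<beta> = S_side (fst E) j \<beta> - S_side (snd E) j \<beta>"

definition to_Qx :: "int poly \<Rightarrow> rat poly fract" where
  "to_Qx p = Fract (map_poly of_int p) 1"

definition lin_dep_Qx :: "nat \<Rightarrow> (nat \<Rightarrow> int poly) \<Rightarrow> (nat \<Rightarrow> int poly) \<Rightarrow> bool" where
  "lin_dep_Qx n s s' \<longleftrightarrow> (\<exists>c d :: rat poly fract. (c \<noteq> 0 \<or> d \<noteq> 0) \<and>
      (\<forall>j<n. c * to_Qx (s j) + d * to_Qx (s' j) = 0))"

end

theory Submission
  imports Defs
begin

definition sc :: "rat \<Rightarrow> (nat \<Rightarrow> rat) \<Rightarrow> (nat \<Rightarrow> rat)" where
  "sc c f = (\<lambda>j. c * f j)"

interpretation VS: vector_space sc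
  by unfold_locales (simp_all add: sc_def fun_eq_iff algebra_simps)

lemma sc_eq: "(\<lambda>(c::rat) (f::nat \<Rightarrow> rat). (\<lambda>j. c * f j)) = sc"
  by (simp add: sc_def fun_eq_iff)

lemma sum_fun_apply: "finite J \<Longrightarrow> (\<Sum>j\<in>J. (f j :: nat \<Rightarrow> rat)) i = (\<Sum>j\<in>J. f j i)"
  by (induct rule: finite_induct) simp_all

lemma kernel_dep:
  fixes \<Gamma> :: "nat \<Rightarrow> nat \<Rightarrow> rat" and z z' :: "nat \<Rightarrow> rat"
  assumes supp: "\<forall>a<k. \<forall>j\<ge>n. \<Gamma> a j = 0"
    and dim: "VS.dim (\<Gamma> ` {..<k}) = n - 1"
    and kz: "\<forall>a<k. (\<Sum>j<n. \<Gamma> a j * z j) = 0"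
    and kz': "\<forall>a<k. (\<Sum>j<n. \<Gamma> a j * z' j) = 0"
  shows "\<exists>c d. (c \<noteq> 0 \<or> d \<noteq> 0) \<and> (\<forall>j<n. c * z j + d * z' j = 0)"
proof (rule ccontr)
  assume ind: "\<not> ?thesis"
  obtain p where p: "p < n" "z p \<noteq> 0"
  proof -
    have "\<exists>p<n. z p \<noteq> 0"
    proof (rule ccontr)
      assume "\<not> ?thesis"
      hence "\<forall>j<n. 1 * z j + 0 * z' j = 0" by auto
      thus False using ind by (metis one_neq_zero)
    qed
    thus ?thesis using that by blast
  qed
  obtain q where q: "q < n" "z p * z' q \<noteq> z q * z' p"
  proof -
    have "\<exists>q<n. z p * z' q \<noteq> z q * z' p"
    proof (rule ccontr)
      assume "\<not> ?thesis"
      hence "\<forall>j<n. z' p * z j + (- z p) * z' j = 0" by (auto simp: algebra_simps)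
      thus False using ind p(2) by (metis neg_equal_0_iff_equal)
    qed
    thus ?thesis using that by blast
  qed
  have pq: "p \<noteq> q" using q(2) by (auto simp: mult.commute)
  define D where "D = z p * z' q - z q * z' p"
  have D: "D \<noteq> 0" using q(2) by (simp add: D_def)
  define J where "J = {..<n} - {p, q}"
  define A where "A j = (z' j * z q - z j * z' q) / D" for j
  define B where "B j = (z j * z' p - z' j * z p) / D" for j
  define b where "b j = (\<lambda>i. (if i = j then 1 else 0) + A j * (if i = p then 1 else 0)
                        + B j * (if i = q then 1 else 0))" for j
  have finJ: "finite J" by (simp add: J_def)
  have nsplit: "{..<n} = insert p (insert q J)" using p q by (auto simp: J_def)
  have pJ: "p \<notin> J" "q \<notin> J" by (auto simp: J_def)
  have span: "\<Gamma> a \<in> VS.span (b ` J)" if a: "a < k" for a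
  proof -
    have eq: "\<Gamma> a = (\<Sum>j\<in>J. sc (\<Gamma> a j) (b j))"
    proof
      fix i
      have rhs: "(\<Sum>j\<in>J. sc (\<Gamma> a j) (b j)) i = (\<Sum>j\<in>J. \<Gamma> a j * b j i)"
        by (simp add: sum_fun_apply finJ sc_def)
      define S1 where "S1 = (\<Sum>j\<in>J. \<Gamma> a j * z j)"
      define S2 where "S2 = (\<Sum>j\<in>J. \<Gamma> a j * z' j)"
      have e1: "\<Gamma> a p * z p + \<Gamma> a q * z q + S1 = 0"
        using kz a pq pJ finJ unfolding nsplit S1_def by (simp add: add.assoc)
      have e2: "\<Gamma> a p * z' p + \<Gamma> a q * z' q + S2 = 0"
        using kz' a pq pJ finJ unfolding nsplit S2_def by (simp add: add.assoc)
      have key: "(\<Sum>j\<in>J. \<Gamma> a j * b j i) = \<Gamma> a i"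
      proof (cases "i \<in> J")
        case True
        hence "i \<noteq> p" "i \<noteq> q" using pJ by auto
        hence "(\<Sum>j\<in>J. \<Gamma> a j * b j i) = (\<Sum>j\<in>J. if i = j then \<Gamma> a j else 0)"
          by (intro sum.cong) (auto simp: b_def)
        also have "\<dots> = \<Gamma> a i" using True finJ by simp
        finally show ?thesis .
      next
        case False
        show ?thesis
        proof (cases "i = p")
          case True
          have "(\<Sum>j\<in>J. \<Gamma> a j * b j i) = (\<Sum>j\<in>J. \<Gamma> a j * A j)"
            using True pJ pq by (intro sum.cong) (auto simp: b_def)
          also have "\<dots> = (\<Sum>j\<in>J. z q * (\<Gamma> a j * z' j) - z' q * (\<Gamma> a j * z j)) / D"
            unfolding sum_divide_distrib by (intro sum.cong refl) (simp add: A_def field_simps)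
          also have "\<dots> = (S2 * z q - S1 * z' q) / D"
            by (simp add: S1_def S2_def sum_subtractf sum_distrib_left mult.commute)
          also have "\<dots> = \<Gamma> a p"
          proof -
            have "S2 * z q - S1 * z' q = \<Gamma> a p * D"
            proof -
              have s1: "S1 = - (\<Gamma> a p * z p + \<Gamma> a q * z q)" using e1 by linarith
              have s2: "S2 = - (\<Gamma> a p * z' p + \<Gamma> a q * z' q)" using e2 by linarith
              show ?thesis unfolding s1 s2 D_def by (simp add: algebra_simps)
            qed
            thus ?thesis using D by simp
          qed
          finally show ?thesis using True by simp
        next
          case np: False
          show ?thesis
          proof (cases "i = q")
            case True
            have "(\<Sum>j\<in>J. \<Gamma> a j * b j i) = (\<Sum>j\<in>J. \<Gamma> a j * B j)"
              using True pJ pq by (intro sum.cong) (auto simp: b_def)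
            also have "\<dots> = (\<Sum>j\<in>J. z' p * (\<Gamma> a j * z j) - z p * (\<Gamma> a j * z' j)) / D"
              unfolding sum_divide_distrib by (intro sum.cong refl) (simp add: B_def field_simps)
            also have "\<dots> = (S1 * z' p - S2 * z p) / D"
              by (simp add: S1_def S2_def sum_subtractf sum_distrib_left mult.commute)
            also have "\<dots> = \<Gamma> a q"
            proof -
              have "S1 * z' p - S2 * z p = \<Gamma> a q * D"
              proof -
                have s1: "S1 = - (\<Gamma> a p * z p + \<Gamma> a q * z q)" using e1 by linarith
                have s2: "S2 = - (\<Gamma> a p * z' p + \<Gamma> a q * z' q)" using e2 by linarith
                show ?thesis unfolding s1 s2 D_def by (simp add: algebra_simps)
              qed
              thus ?thesis using D by simp
            qed
            finally show ?thesis using True by simp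
          next
            case nq: False
            with False np have "i \<ge> n" using p q by (auto simp: J_def)
            hence "\<Gamma> a i = 0" using supp a by auto
            moreover have "(\<Sum>j\<in>J. \<Gamma> a j * b j i) = 0"
              using np nq \<open>i \<ge> n\<close> by (intro sum.neutral) (auto simp: b_def J_def)
            ultimately show ?thesis by simp
          qed
        qed
      qed
      show "\<Gamma> a i = (\<Sum>j\<in>J. sc (\<Gamma> a j) (b j)) i" using key rhs by simp
    qed
    show ?thesis
      by (subst eq, intro VS.span_sum VS.span_scale VS.span_base) auto
  qed
  have "VS.dim (\<Gamma> ` {..<k}) \<le> card (b ` J)"
    using span finJ by (intro VS.dim_le_card) auto
  also have "\<dots> \<le> card J" using finJ by (rule card_image_le)
  also have "card J = n - 2" using p q pq unfolding J_def
    by (subst card_Diff_subset) auto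
  finally show False using dim p q pq by linarith
qed


definition inV :: "nat \<Rightarrow> nat \<Rightarrow> (nat \<Rightarrow> nat \<Rightarrow> rat poly) \<Rightarrow> (nat \<Rightarrow> rat poly) \<Rightarrow> bool" where
  "inV n k G u \<longleftrightarrow> (\<forall>a<k. (\<Sum>j<n. G a j * u j) = 0)"

definition dep :: "nat \<Rightarrow> (nat \<Rightarrow> rat poly) \<Rightarrow> (nat \<Rightarrow> rat poly) \<Rightarrow> bool" where
  "dep n u u' \<longleftrightarrow> (\<exists>c d. (c \<noteq> 0 \<or> d \<noteq> 0) \<and> (\<forall>j<n. c * u j + d * u' j = 0))"

lemma dep_sym: "dep n u u' \<Longrightarrow> dep n u' u"
  unfolding dep_def by (metis add.commute)

lemma dep_zero: "\<forall>j<n. u j = 0 \<Longrightarrow> dep n u u'"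
  unfolding dep_def by (rule exI[of _ 1], rule exI[of _ 0]) simp

lemma dep_mult:
  assumes "dep n w u'" "P \<noteq> 0" "\<forall>j<n. u j = P * w j"
  shows "dep n u u'"
proof -
  obtain c d where cd: "c \<noteq> 0 \<or> d \<noteq> 0" "\<forall>j<n. c * w j + d * u' j = 0"
    using assms(1) unfolding dep_def by blast
  have "\<forall>j<n. c * u j + (P * d) * u' j = 0"
  proof (intro allI impI)
    fix j assume j: "j < n"
    have "c * u j + (P * d) * u' j = P * (c * w j + d * u' j)"
      using assms(3) j by (simp add: algebra_simps)
    thus "c * u j + (P * d) * u' j = 0" using cd(2) j by simp
  qed
  moreover have "c \<noteq> 0 \<or> P * d \<noteq> 0" using cd(1) assms(2) by auto
  ultimately show ?thesis unfolding dep_def by blast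
qed

lemma dep_comb:
  assumes "dep n w u'" "C \<noteq> 0" "\<forall>j<n. w j = C * u j + Dd * u' j"
  shows "dep n u u'"
proof -
  obtain c d where cd: "c \<noteq> 0 \<or> d \<noteq> 0" "\<forall>j<n. c * w j + d * u' j = 0"
    using assms(1) unfolding dep_def by blast
  have "\<forall>j<n. (c * C) * u j + (c * Dd + d) * u' j = 0"
  proof (intro allI impI)
    fix j assume j: "j < n"
    have "(c * C) * u j + (c * Dd + d) * u' j = c * w j + d * u' j"
      using assms(3) j by (simp add: algebra_simps)
    thus "(c * C) * u j + (c * Dd + d) * u' j = 0" using cd(2) j by simp
  qed
  moreover have "c * C \<noteq> 0 \<or> c * Dd + d \<noteq> 0" using cd(1) assms(2) by auto
  ultimately show ?thesis unfolding dep_def by blast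
qed

lemma divide_step:
  fixes u :: "nat \<Rightarrow> rat poly"
  assumes "inV n k G u" "\<forall>j<n. poly (u j) 1 = 0" "\<forall>j<n. degree (u j) \<le> a"
    "\<not> (\<forall>j<n. u j = 0)"
  shows "\<exists>w. inV n k G w \<and> (\<forall>j<n. u j = [:-1,1:] * w j) \<and> (\<forall>j<n. degree (w j) \<le> a - 1) \<and> a \<ge> 1"
proof -
  define w where "w j = u j div [:-1,1:]" for j
  have uw: "\<forall>j<n. u j = [:-1,1:] * w j"
  proof (intro allI impI)
    fix j assume "j < n"
    hence "[:-1,1:] dvd u j" using assms(2) poly_eq_0_iff_dvd[of "u j" 1] by simp
    thus "u j = [:-1,1:] * w j" unfolding w_def by (rule dvd_mult_div_cancel[symmetric])
  qed
  have X: "[:-1,1::rat:] \<noteq> 0" by simp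
  have "inV n k G w" unfolding inV_def
  proof (intro allI impI)
    fix a assume a: "a < k"
    have "[:-1,1:] * (\<Sum>j<n. G a j * w j) = (\<Sum>j<n. G a j * u j)"
      unfolding sum_distrib_left
    proof (intro sum.cong refl)
      fix j assume "j \<in> {..<n}"
      thus "[:-1,1:] * (G a j * w j) = G a j * u j" using uw by (metis mult.left_commute lessThan_iff)
    qed
    also have "\<dots> = 0" using assms(1) a unfolding inV_def by simp
    finally show "(\<Sum>j<n. G a j * w j) = 0" using X by (metis mult_eq_0_iff)
  qed
  moreover have dg: "degree (u j) = degree (w j) + 1" if "j < n" "w j \<noteq> 0" for j
  proof -
    have e: "u j = [:-1,1:] * w j" using uw that(1) by blast
    show ?thesis unfolding e degree_mult_eq[OF X that(2)] by simp
  qed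
  moreover have "a \<ge> 1"
  proof -
    obtain j where j: "j < n" "u j \<noteq> 0" using assms(4) by blast
    hence "w j \<noteq> 0" using uw by auto
    thus ?thesis using dg[OF j(1)] assms(3) j by fastforce
  qed
  moreover have "\<forall>j<n. degree (w j) \<le> a - 1"
    using dg assms(3) by (metis add_diff_cancel_right' degree_0 diff_le_mono zero_le)
  ultimately show ?thesis using uw by blast
qed

lemma inV_eval:
  assumes "inV n k G u"
  shows "\<forall>a<k. (\<Sum>j<n. poly (G a j) 1 * poly (u j) 1) = 0"
proof (intro allI impI)
  fix a assume "a < k"
  hence "poly (\<Sum>j<n. G a j * u j) 1 = 0" using assms unfolding inV_def by simp
  thus "(\<Sum>j<n. poly (G a j) 1 * poly (u j) 1) = 0" by (simp add: poly_sum)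
qed

lemma descent_aux:
  fixes G :: "nat \<Rightarrow> nat \<Rightarrow> rat poly"
  assumes ker: "\<forall>z z'. (\<forall>a<k. (\<Sum>j<n. poly (G a j) 1 * z j) = 0) \<longrightarrow>
      (\<forall>a<k. (\<Sum>j<n. poly (G a j) 1 * z' j) = 0) \<longrightarrow>
      (\<exists>c d. (c \<noteq> 0 \<or> d \<noteq> 0) \<and> (\<forall>j<n. c * z j + d * z' j = 0))"
  shows "\<forall>u u' a b. a + b = m \<longrightarrow> inV n k G u \<longrightarrow> inV n k G u' \<longrightarrow>
     (\<forall>j<n. degree (u j) \<le> a) \<longrightarrow> (\<forall>j<n. degree (u' j) \<le> b) \<longrightarrow> dep n u u'"
proof (induction m rule: less_induct)
  case (less m)
  have main: "dep n u u'" if ab: "a + b = m" "b \<le> a" and V: "inV n k G u" "inV n k G u'"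
     and dg: "\<forall>j<n. degree (u j) \<le> a" "\<forall>j<n. degree (u' j) \<le> b"
     and c: "c \<noteq> 0" and z: "\<forall>j<n. c * poly (u j) 1 + d * poly (u' j) 1 = 0"
   for u u' a b c d
  proof -
    define wv where "wv j = [:c:] * u j + [:d:] * u' j" for j
    have Vw: "inV n k G wv" unfolding inV_def
    proof (intro allI impI)
      fix i assume i: "i < k"
      have "(\<Sum>j<n. G i j * wv j) = [:c:] * (\<Sum>j<n. G i j * u j) + [:d:] * (\<Sum>j<n. G i j * u' j)"
        unfolding wv_def sum_distrib_left sum.distrib[symmetric]
        by (intro sum.cong) (auto simp: algebra_simps)
      thus "(\<Sum>j<n. G i j * wv j) = 0" using V i unfolding inV_def by simp
    qed
    have dw: "\<forall>j<n. degree (wv j) \<le> a"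
    proof (intro allI impI)
      fix j assume j: "j < n"
      have "degree ([:c:] * u j) \<le> a" using dg j by (cases "c = 0") auto
      moreover have "degree ([:d:] * u' j) \<le> a" using dg j ab(2) by (cases "d = 0") auto
      ultimately show "degree (wv j) \<le> a" unfolding wv_def by (rule degree_add_le)
    qed
    have pw: "\<forall>j<n. poly (wv j) 1 = 0" using z by (simp add: wv_def)
    have "dep n wv u'"
    proof (cases "\<forall>j<n. wv j = 0")
      case True thus ?thesis by (rule dep_zero)
    next
      case False
      then obtain w2 where w2: "inV n k G w2" "\<forall>j<n. wv j = [:-1,1:] * w2 j"
        "\<forall>j<n. degree (w2 j) \<le> a - 1" "a \<ge> 1"
        using divide_step[OF Vw pw dw] by blast
      have lt: "a - 1 + b < m" using ab w2(4) by simp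
      have "dep n w2 u'" using less.IH[OF lt, THEN spec[of _ w2], THEN spec[of _ u'], THEN spec[of _ "a - 1"], THEN spec[of _ b]] w2 V dg by simp
      thus ?thesis using dep_mult[OF _ _ w2(2)] by simp
    qed
    thus ?thesis using c by (intro dep_comb[of n wv u' "[:c:]" u "[:d:]"]) (auto simp: wv_def)
  qed
  show ?case
  proof (intro allI impI)
    fix u u' a b
    assume ab: "a + b = m" and V: "inV n k G u" "inV n k G u'"
      and dg: "\<forall>j<n. degree (u j) \<le> a" "\<forall>j<n. degree (u' j) \<le> b"
    show "dep n u u'"
    proof (cases "\<forall>j<n. u j = 0")
      case True thus ?thesis by (rule dep_zero)
    next
      case nu: False
      show ?thesis
      proof (cases "\<forall>j<n. u' j = 0")
        case True show ?thesis by (rule dep_sym[OF dep_zero[OF True]])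
      next
        case nu': False
        show ?thesis
        proof (cases "\<forall>j<n. poly (u j) 1 = 0")
          case True
          then obtain w where w: "inV n k G w" "\<forall>j<n. u j = [:-1,1:] * w j"
            "\<forall>j<n. degree (w j) \<le> a - 1" "a \<ge> 1"
            using divide_step[OF V(1) _ dg(1) nu] by blast
          have lt: "a - 1 + b < m" using ab w(4) by simp
          have "dep n w u'" using less.IH[OF lt, THEN spec[of _ w], THEN spec[of _ u'], THEN spec[of _ "a - 1"], THEN spec[of _ b]] w V dg by simp
          thus ?thesis using dep_mult[OF _ _ w(2)] by simp
        next
          case pu: False
          show ?thesis
          proof (cases "\<forall>j<n. poly (u' j) 1 = 0")
            case True
            then obtain w where w: "inV n k G w" "\<forall>j<n. u' j = [:-1,1:] * w j"
              "\<forall>j<n. degree (w j) \<le> b - 1" "b \<ge> 1"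
              using divide_step[OF V(2) _ dg(2) nu'] by blast
            have lt: "b - 1 + a < m" using ab w(4) by simp
            have "dep n w u" using less.IH[OF lt, THEN spec[of _ w], THEN spec[of _ u], THEN spec[of _ "b - 1"], THEN spec[of _ a]] w V dg by simp
            hence "dep n u' u" using dep_mult[OF _ _ w(2)] by simp
            thus ?thesis by (rule dep_sym)
          next
            case pu': False
            obtain c d where cd: "c \<noteq> 0 \<or> d \<noteq> 0"
              "\<forall>j<n. c * poly (u j) 1 + d * poly (u' j) 1 = 0"
              using ker[THEN spec[of _ "\<lambda>j. poly (u j) 1"], THEN spec[of _ "\<lambda>j. poly (u' j) 1"]]
                inV_eval[OF V(1)] inV_eval[OF V(2)] by blast
            have c0: "c \<noteq> 0"
            proof
              assume "c = 0"
              hence "d \<noteq> 0" using cd by auto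
              thus False using cd(2) pu' \<open>c = 0\<close> by auto
            qed
            have d0: "d \<noteq> 0"
            proof
              assume "d = 0"
              thus False using cd(2) pu c0 by auto
            qed
            show ?thesis
            proof (cases "b \<le> a")
              case True show ?thesis by (rule main[OF ab True V dg c0 cd(2)])
            next
              case False
              have "dep n u' u"
                using main[of b a u' u d c] ab False V dg d0 cd(2)
                by (auto simp: add.commute)
              thus ?thesis by (rule dep_sym)
            qed
          qed
        qed
      qed
    qed
  qed
qed


fun Pos :: "nat \<Rightarrow> nat list \<Rightarrow> rat poly" where
  "Pos a [] = 0"
| "Pos a (c # w) = (if c = a then 1 else 0) + pCons 0 (Pos a w)"

lemma pCons0_monom: "pCons 0 (monom 1 m * q) = monom 1 (Suc m) * (q :: rat poly)"
  by (simp add: monom_Suc)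

lemma pCons0_add: "pCons 0 (p + q) = pCons 0 p + pCons (0::rat) q"
  by simp

lemma Pos_append: "Pos a (u @ v) = Pos a u + monom 1 (length u) * Pos a v"
  by (induction u) (simp_all add: pCons0_monom pCons0_add)

lemma Pos_eval: "poly (Pos a w) 1 = of_nat (count_list w a)"
  by (induction w) auto

definition SR :: "nat list \<Rightarrow> nat \<Rightarrow> (nat \<Rightarrow> nat) \<Rightarrow> rat poly" where
  "SR w j \<beta> = (\<Sum>a<length w. if w ! a = j then monom 1 (\<Sum>t<a. \<beta> (w ! t)) else 0)"

lemma mp_add: "map_poly (of_int :: int \<Rightarrow> rat) (p + q) = map_poly of_int p + map_poly of_int q"
  by (rule poly_eqI) (simp add: coeff_map_poly)

lemma mp_diff: "map_poly (of_int :: int \<Rightarrow> rat) (p - q) = map_poly of_int p - map_poly of_int q"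
  by (rule poly_eqI) (simp add: coeff_map_poly)

lemma mp_sum: fixes m :: nat shows "map_poly (of_int :: int \<Rightarrow> rat) (\<Sum>i<m. f i) = (\<Sum>i<m. map_poly of_int (f i))"
  by (induction m) (simp_all add: mp_add)

lemma S_side_map: "map_poly of_int (S_side w j \<beta>) = SR w j \<beta>"
  unfolding S_side_def SR_def mp_sum
  by (intro sum.cong refl) (simp add: map_poly_monom)

lemma SR_sum:
  assumes "set w \<subseteq> {..<n}"
  shows "(\<Sum>j<n. SR w j \<beta> * P j) = (\<Sum>s<length w. monom 1 (\<Sum>t<s. \<beta> (w ! t)) * P (w ! s))"
proof -
  have "(\<Sum>j<n. SR w j \<beta> * P j) =
        (\<Sum>j<n. \<Sum>s<length w. if w ! s = j then monom 1 (\<Sum>t<s. \<beta> (w ! t)) * P j else 0)"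
    unfolding SR_def sum_distrib_right by (intro sum.cong refl) auto
  also have "\<dots> = (\<Sum>s<length w. \<Sum>j<n. if w ! s = j then monom 1 (\<Sum>t<s. \<beta> (w ! t)) * P j else 0)"
    by (rule sum.swap)
  also have "\<dots> = (\<Sum>s<length w. monom 1 (\<Sum>t<s. \<beta> (w ! t)) * P (w ! s))"
  proof (intro sum.cong refl)
    fix s assume "s \<in> {..<length w}"
    hence "w ! s < n" using assms nth_mem by fastforce
    thus "(\<Sum>j<n. if w ! s = j then monom 1 (\<Sum>t<s. \<beta> (w ! t)) * P j else 0) =
          monom 1 (\<Sum>t<s. \<beta> (w ! t)) * P (w ! s)"
      by (simp add: sum.delta)
  qed
  finally show ?thesis .
qed

lemma Pos_concat:
  "Pos a (concat (map g w)) =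
   (\<Sum>s<length w. monom 1 (\<Sum>t<s. length (g (w ! t))) * Pos a (g (w ! s)))"
proof (induction w)
  case Nil thus ?case by simp
next
  case (Cons c w)
  have "Pos a (concat (map g (c # w))) = Pos a (g c) + monom 1 (length (g c)) * Pos a (concat (map g w))"
    by (simp add: Pos_append)
  also have "\<dots> = Pos a (g c) + (\<Sum>s<length w. monom 1 (length (g c)) *
        (monom 1 (\<Sum>t<s. length (g (w ! t))) * Pos a (g (w ! s))))"
    by (simp add: Cons sum_distrib_left)
  also have "\<dots> = (\<Sum>s<length (c # w). monom 1 (\<Sum>t<s. length (g ((c # w) ! t))) * Pos a (g ((c # w) ! s)))"
    by (simp only: length_Cons sum.lessThan_Suc_shift)
       (simp add: sum.lessThan_Suc_shift mult_monom monom_0 flip: mult.assoc)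
  finally show ?case .
qed

lemma theta_concat: "theta \<alpha> (concat xs) = concat (map (theta \<alpha>) xs)"
  by (induction xs) (simp_all add: theta_def)

lemma count_theta: "count_list (theta \<alpha> w) a = \<alpha> a * count_list w a"
proof (induction w)
  case Nil thus ?case by (simp add: theta_def)
next
  case (Cons c w)
  have "count_list (replicate m c) a = (if c = a then m else 0)" for m
    by (induction m) auto
  thus ?case using Cons by (simp add: theta_def)
qed


lemma Fract1_eq0: "Fract (c::'a::idom) 1 = 0 \<longleftrightarrow> c = 0"
  unfolding Zero_fract_def by (subst eq_fract(1)) auto
lemma Fract1_lin: "Fract (c::'a::idom) 1 * Fract x 1 + Fract d 1 * Fract y 1 = Fract (c * x + d * y) 1"
  by simp


lemma inV_S:
  assumes "is_equation n E" "is_solution h E"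
  shows "inV n k (\<lambda>a j. Pos a ((theta \<alpha> \<circ> h) j)) (\<lambda>j. map_poly of_int (S_poly E j (Lvec (theta \<alpha> \<circ> h))))"
  unfolding inV_def
proof (intro allI impI)
  fix a assume "a < k"
  define g where "g = theta \<alpha> \<circ> h"
  have sol: "concat (map g w) = theta \<alpha> (morph h w)" for w
    by (simp add: g_def morph_def theta_concat)
  have e: "concat (map g (fst E)) = concat (map g (snd E))"
    using assms(2) unfolding sol is_solution_def by simp
  have L: "Lvec g = (\<lambda>t. length (g t))" by (simp add: Lvec_def fun_eq_iff)
  have "(\<Sum>j<n. Pos a (g j) * map_poly of_int (S_poly E j (Lvec g))) =
        (\<Sum>j<n. SR (fst E) j (Lvec g) * Pos a (g j)) - (\<Sum>j<n. SR (snd E) j (Lvec g) * Pos a (g j))"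
    unfolding sum_subtractf[symmetric] S_poly_def mp_diff S_side_map
    by (intro sum.cong refl) (simp add: algebra_simps)
  also have "\<dots> = Pos a (concat (map g (fst E))) - Pos a (concat (map g (snd E)))"
    using assms(1) unfolding is_equation_def
    by (simp add: SR_sum Pos_concat L)
  also have "\<dots> = 0" using e by simp
  finally show "(\<Sum>j<n. Pos a ((theta \<alpha> \<circ> h) j) * map_poly of_int (S_poly E j (Lvec (theta \<alpha> \<circ> h)))) = 0"
    by (simp add: g_def)
qed

lemma eval_gamma:
  assumes "\<forall>i<k. \<alpha> i > 0"
    and "\<forall>a<k. (\<Sum>j<n. poly (Pos a ((theta \<alpha> \<circ> h) j)) 1 * z j) = 0"
  shows "\<forall>a<k. (\<Sum>j<n. gamma n h a j * z j) = 0"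
proof (intro allI impI)
  fix a assume a: "a < k"
  have "(\<Sum>j<n. poly (Pos a ((theta \<alpha> \<circ> h) j)) 1 * z j) = of_nat (\<alpha> a) * (\<Sum>j<n. gamma n h a j * z j)"
    unfolding sum_distrib_left
    by (intro sum.cong refl) (simp add: Pos_eval count_theta gamma_def)
  thus "(\<Sum>j<n. gamma n h a j * z j) = 0" using assms a by auto
qed

theorem lemma3p2:
  fixes n k :: nat and h :: "nat \<Rightarrow> nat list" and E E' :: "nat list \<times> nat list"
    and \<alpha> :: "nat \<Rightarrow> nat"
  assumes "is_morph n k h"
    and "is_equation n E" and "is_equation n E'"
    and "is_solution h E" and "is_solution h E'"
    and "rank_morph n k h = n - 1"
    and "\<forall>i<k. \<alpha> i > 0"
  shows "lin_dep_Qx n (\<lambda>j. S_poly E j (Lvec (theta \<alpha> \<circ> h)))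
                      (\<lambda>j. S_poly E' j (Lvec (theta \<alpha> \<circ> h)))"
proof -
  define G where "G = (\<lambda>a j. Pos a ((theta \<alpha> \<circ> h) j))"
  define u where "u = (\<lambda>j. map_poly (of_int :: int \<Rightarrow> rat) (S_poly E j (Lvec (theta \<alpha> \<circ> h))))"
  define u' where "u' = (\<lambda>j. map_poly (of_int :: int \<Rightarrow> rat) (S_poly E' j (Lvec (theta \<alpha> \<circ> h))))"
  have V: "inV n k G u" "inV n k G u'"
    using inV_S[OF assms(2,4)] inV_S[OF assms(3,5)] by (simp_all add: G_def u_def u'_def)
  have dim: "VS.dim (gamma n h ` {..<k}) = n - 1"
    using assms(6) unfolding rank_morph_def sc_eq .
  have ker: "\<forall>z z'. (\<forall>a<k. (\<Sum>j<n. poly (G a j) 1 * z j) = 0) \<longrightarrow>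
      (\<forall>a<k. (\<Sum>j<n. poly (G a j) 1 * z' j) = 0) \<longrightarrow>
      (\<exists>c d. (c \<noteq> 0 \<or> d \<noteq> 0) \<and> (\<forall>j<n. c * z j + d * z' j = 0))"
  proof (intro allI impI)
    fix z z' :: "nat \<Rightarrow> rat"
    assume "\<forall>a<k. (\<Sum>j<n. poly (G a j) 1 * z j) = 0" "\<forall>a<k. (\<Sum>j<n. poly (G a j) 1 * z' j) = 0"
    hence "\<forall>a<k. (\<Sum>j<n. gamma n h a j * z j) = 0" "\<forall>a<k. (\<Sum>j<n. gamma n h a j * z' j) = 0"
      using eval_gamma[OF assms(7)] unfolding G_def by blast+
    thus "\<exists>c d. (c \<noteq> 0 \<or> d \<noteq> 0) \<and> (\<forall>j<n. c * z j + d * z' j = 0)"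
      using kernel_dep[OF _ dim] by (simp add: gamma_def)
  qed
  define A where "A = (\<Sum>j<n. degree (u j))"
  define B where "B = (\<Sum>j<n. degree (u' j))"
  have dA: "\<forall>j<n. degree (u j) \<le> A" unfolding A_def
    by (auto intro: member_le_sum[of _ "{..<n}", simplified])
  have dB: "\<forall>j<n. degree (u' j) \<le> B" unfolding B_def
    by (auto intro: member_le_sum[of _ "{..<n}", simplified])
  have "dep n u u'"
    using descent_aux[OF ker, of "A + B", THEN spec[of _ u], THEN spec[of _ u'],
        THEN spec[of _ A], THEN spec[of _ B]] V dA dB by simp
  then obtain c d where cd: "c \<noteq> 0 \<or> d \<noteq> 0" "\<forall>j<n. c * u j + d * u' j = 0"
    unfolding dep_def by blast
  show ?thesis unfolding lin_dep_Qx_def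
  proof (intro exI conjI allI impI)
    show "Fract c 1 \<noteq> 0 \<or> Fract d 1 \<noteq> 0" using cd(1)
      by (simp only: Fract1_eq0)
    fix j assume "j < n"
    hence "c * u j + d * u' j = 0" using cd(2) by simp
    thus "Fract c 1 * to_Qx (S_poly E j (Lvec (theta \<alpha> \<circ> h))) +
          Fract d 1 * to_Qx (S_poly E' j (Lvec (theta \<alpha> \<circ> h))) = 0"
      unfolding to_Qx_def Fract1_lin by (simp add: u_def u'_def Fract1_eq0)
  qed
qed

end
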